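(* Let $S$ be a semiring. If $\mathcal{A}=(A,X,Y,a_0,\delta,\omega)$ is a crisp-deterministic Mealy-type weighted automaton over $S$, then $[\![\mathcal{A}]\!]_{cd}=[\![\mathcal{A}]\!]_{1n}=[\![\mathcal{A}]\!]_{n1}=[\![\mathcal{A}]\!]_s$. If $\mathcal{A}=(A,X,Y,a_0,\delta,\omega)$ is a crisp-deterministic Moore-type weighted automaton over $S$, then $[\![\mathcal{A}]\!]_{cd}=[\![\mathcal{A}]\!]_{1n}=[\![\mathcal{A}]\!]_{n1}$.
   Context: A semiring $(S,+,\cdot,0,1)$ is a set with $(S,+,0)$ a commutative monoid, $(S,\cdot,1)$ a monoid (not necessarily commutative), $\cdot$ distributing over $+$ on both sides, and $0\cdot s=s\cdot 0=0$. $(X\times Y)^*$ is identified with pairs $(u,v)\in X^*\times Y^*$ with $|u|=|v|$; empty element $(\varepsilon,\varepsilon)$. $A,X,Y$ are finite nonempty sets. A crisp-deterministic Mealy-type (resp. Moore-type) weighted automaton is $\mathcal{A}=(A,X,Y,a_0,\delta,\omega)$ with $a_0\in A$, a transition function $\delta:A\times X\to A$, and $\omega:A\times X\times Y\to S$ (resp. $\omega:A\times Y\to S$). Write $\delta_x(a)=\delta(a,x)$, $\delta_\varepsilon(a)=a$, $\delta_{wx}(a)=\delta_x(\delta_w(a))$, and $\omega_{x,y}(a)=\omega(a,x,y)$ (resp. $\omega_y(a)=\omega(a,y)$). It is regarded as a general weighted automaton with initial weight vector $\sigma(a_0)=1$, $\sigma(a)=0$ for $a\ne a_0$, and weighted transitions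 $\hat\delta_x(a,b)=1$ if $b=\delta(a,x)$ and $0$ otherwise; for $w=z_1\cdots z_m\in X^+$ put $\hat\delta_w=\hat\delta_{z_1}\cdots\hat\delta_{z_m}$ (matrix product over $S$). cd-behavior: $[\![\mathcal{A}]\!]_{cd}(\varepsilon,\varepsilon)=1$ and for $u=x_1\cdots x_n$, $v=y_1\cdots y_n$, $n\ge1$: in the Mealy case $[\![\mathcal{A}]\!]_{cd}(u,v)=\omega_{x_1,y_1}(a_0)\cdot\omega_{x_2,y_2}(\delta_{x_1}(a_0))\cdots\omega_{x_n,y_n}(\delta_{x_1\cdots x_{n-1}}(a_0))$; in the Moore case $[\![\mathcal{A}]\!]_{cd}(u,v)=\omega_{y_1}(\delta_{x_1}(a_0))\cdot\omega_{y_2}(\delta_{x_1x_2}(a_0))\cdots\omega_{y_n}(\delta_{x_1\cdots x_n}(a_0))$. All of the following behaviors take value $\sum_{a\in A}\sigma(a)$ at $(\varepsilon,\varepsilon)$; for $u=x_1\cdots x_n$, $v=y_1\cdots y_n$, $n\ge1$: Mealy $1n$: $\sum_{(a_0',\dots,a_{n-1}')\in A^n}\sigma(a_0')\omega_{x_1,y_1}(a_0')\hat\delta_{x_1}(a_0',a_1')\omega_{x_2,y_2}(a_1')\cdots\hat\delta_{x_{n-1}}(a_{n-2}',a_{n-1}')\omega_{x_n,y_n}(a_{n-1}')$. Mealy $n1$: $\sum_{(a_0',\dots,a_{n-1}')\in A^n}\sigma(a_0')\omega_{x_1,y_1}(a_0')\hat\delta_{x_1}(a_0',a_1')\omega_{x_2,y_2}(a_1')\hat\delta_{x_1x_2}(a_0',a_2')\omega_{x_3,y_3}(a_2')\cdots\hat\delta_{x_1\cdots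 x_{n-1}}(a_0',a_{n-1}')\omega_{x_n,y_n}(a_{n-1}')$. Mealy sequential $s$: $\sum_{(a_0',\dots,a_n')\in A^{n+1}}\sigma(a_0')\omega_{x_1,y_1}(a_0')\hat\delta_{x_1}(a_0',a_1')\cdots\omega_{x_n,y_n}(a_{n-1}')\hat\delta_{x_n}(a_{n-1}',a_n')$. Moore $1n$: $\sum_{(a_0',\dots,a_n')\in A^{n+1}}\sigma(a_0')\hat\delta_{x_1}(a_0',a_1')\omega_{y_1}(a_1')\cdots\hat\delta_{x_n}(a_{n-1}',a_n')\omega_{y_n}(a_n')$. Moore $n1$: $\sum_{(a_0',\dots,a_n')\in A^{n+1}}\sigma(a_0')\hat\delta_{x_1}(a_0',a_1')\omega_{y_1}(a_1')\hat\delta_{x_1x_2}(a_0',a_2')\omega_{y_2}(a_2')\cdots\hat\delta_{x_1\cdots x_n}(a_0',a_n')\omega_{y_n}(a_n')$. *)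

theory Defs
  imports Main
begin

text \<open>Semiring: commutative additive monoid, multiplicative monoid (not necessarily
commutative), two-sided distributivity, zero annihilating. In Isabelle this is the sort
{semiring_0, monoid_mult} (we avoid semiring_1 since it additionally demands 0 \<noteq> 1). Words in (X \<times> Y)^*
are pairs of lists of equal length; list index i corresponds to position i+1 of the paper.\<close>

definition delta_word :: "('a \<Rightarrow> 'x \<Rightarrow> 'a) \<Rightarrow> 'x list \<Rightarrow> 'a \<Rightarrow> 'a" where
  "delta_word \<delta> w a = fold (\<lambda>x b. \<delta> b x) w a"

definition sigma :: "'a \<Rightarrow> 'a \<Rightarrow> 's::{semiring_0,monoid_mult}" where
  "sigma a0 a = (if a = a0 then 1 else 0)"

definition hat_delta :: "('a \<Rightarrow> 'x \<Rightarrow> 'a) \<Rightarrow> 'x \<Rightarrow> 'a \<Rightarrow> 'a \<Rightarrow> 's::{semiring_0,monoid_mult}" where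
  "hat_delta \<delta> x a b = (if b = \<delta> a x then 1 else 0)"

fun hat_delta_word :: "('a::finite \<Rightarrow> 'x \<Rightarrow> 'a) \<Rightarrow> 'x list \<Rightarrow> 'a \<Rightarrow> 'a \<Rightarrow> 's::{semiring_0,monoid_mult}" where
  "hat_delta_word \<delta> [] a b = (if a = b then 1 else 0)"
| "hat_delta_word \<delta> (x # w) a b = (\<Sum>c\<in>UNIV. hat_delta \<delta> x a c * hat_delta_word \<delta> w c b)"

definition mealy_cd :: "'a \<Rightarrow> ('a \<Rightarrow> 'x \<Rightarrow> 'a) \<Rightarrow> ('a \<Rightarrow> 'x \<Rightarrow> 'y \<Rightarrow> 's::{semiring_0,monoid_mult})
    \<Rightarrow> 'x list \<Rightarrow> 'y list \<Rightarrow> 's" where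
  "mealy_cd a0 \<delta> \<omega> u v =
    (if length u = 0 then 1
     else prod_list (map (\<lambda>i. \<omega> (delta_word \<delta> (take i u) a0) (u ! i) (v ! i)) [0..<length u]))"

definition mealy_1n :: "'a::finite \<Rightarrow> ('a \<Rightarrow> 'x \<Rightarrow> 'a) \<Rightarrow> ('a \<Rightarrow> 'x \<Rightarrow> 'y \<Rightarrow> 's::{semiring_0,monoid_mult})
    \<Rightarrow> 'x list \<Rightarrow> 'y list \<Rightarrow> 's" where
  "mealy_1n a0 \<delta> \<omega> u v =
    (if length u = 0 then (\<Sum>a\<in>UNIV. sigma a0 a)
     else (\<Sum>as\<in>{as::'a list. length as = length u}.
        sigma a0 (as ! 0) *
        prod_list (map (\<lambda>i. (if i = 0 then 1 else hat_delta \<delta> (u ! (i - 1)) (as ! (i - 1)) (as ! i))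
                             * \<omega> (as ! i) (u ! i) (v ! i)) [0..<length u])))"

definition mealy_n1 :: "'a::finite \<Rightarrow> ('a \<Rightarrow> 'x \<Rightarrow> 'a) \<Rightarrow> ('a \<Rightarrow> 'x \<Rightarrow> 'y \<Rightarrow> 's::{semiring_0,monoid_mult})
    \<Rightarrow> 'x list \<Rightarrow> 'y list \<Rightarrow> 's" where
  "mealy_n1 a0 \<delta> \<omega> u v =
    (if length u = 0 then (\<Sum>a\<in>UNIV. sigma a0 a)
     else (\<Sum>as\<in>{as::'a list. length as = length u}.
        sigma a0 (as ! 0) *
        prod_list (map (\<lambda>i. (if i = 0 then 1 else hat_delta_word \<delta> (take i u) (as ! 0) (as ! i))
                             * \<omega> (as ! i) (u ! i) (v ! i)) [0..<length u])))"

definition mealy_s :: "'a::finite \<Rightarrow> ('a \<Rightarrow> 'x \<Rightarrow> 'a) \<Rightarrow> ('a \<Rightarrow> 'x \<Rightarrow> 'y \<Rightarrow> 's::{semiring_0,monoid_mult})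
    \<Rightarrow> 'x list \<Rightarrow> 'y list \<Rightarrow> 's" where
  "mealy_s a0 \<delta> \<omega> u v =
    (if length u = 0 then (\<Sum>a\<in>UNIV. sigma a0 a)
     else (\<Sum>as\<in>{as::'a list. length as = length u + 1}.
        sigma a0 (as ! 0) *
        prod_list (map (\<lambda>i. \<omega> (as ! i) (u ! i) (v ! i) * hat_delta \<delta> (u ! i) (as ! i) (as ! (i + 1)))
                       [0..<length u])))"

definition moore_cd :: "'a \<Rightarrow> ('a \<Rightarrow> 'x \<Rightarrow> 'a) \<Rightarrow> ('a \<Rightarrow> 'y \<Rightarrow> 's::{semiring_0,monoid_mult})
    \<Rightarrow> 'x list \<Rightarrow> 'y list \<Rightarrow> 's" where
  "moore_cd a0 \<delta> \<omega> u v =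
    (if length u = 0 then 1
     else prod_list (map (\<lambda>i. \<omega> (delta_word \<delta> (take (i + 1) u) a0) (v ! i)) [0..<length u]))"

definition moore_1n :: "'a::finite \<Rightarrow> ('a \<Rightarrow> 'x \<Rightarrow> 'a) \<Rightarrow> ('a \<Rightarrow> 'y \<Rightarrow> 's::{semiring_0,monoid_mult})
    \<Rightarrow> 'x list \<Rightarrow> 'y list \<Rightarrow> 's" where
  "moore_1n a0 \<delta> \<omega> u v =
    (if length u = 0 then (\<Sum>a\<in>UNIV. sigma a0 a)
     else (\<Sum>as\<in>{as::'a list. length as = length u + 1}.
        sigma a0 (as ! 0) *
        prod_list (map (\<lambda>i. hat_delta \<delta> (u ! i) (as ! i) (as ! (i + 1)) * \<omega> (as ! (i + 1)) (v ! i))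
                       [0..<length u])))"

definition moore_n1 :: "'a::finite \<Rightarrow> ('a \<Rightarrow> 'x \<Rightarrow> 'a) \<Rightarrow> ('a \<Rightarrow> 'y \<Rightarrow> 's::{semiring_0,monoid_mult})
    \<Rightarrow> 'x list \<Rightarrow> 'y list \<Rightarrow> 's" where
  "moore_n1 a0 \<delta> \<omega> u v =
    (if length u = 0 then (\<Sum>a\<in>UNIV. sigma a0 a)
     else (\<Sum>as\<in>{as::'a list. length as = length u + 1}.
        sigma a0 (as ! 0) *
        prod_list (map (\<lambda>i. hat_delta_word \<delta> (take (i + 1) u) (as ! 0) (as ! (i + 1)) * \<omega> (as ! (i + 1)) (v ! i))
                       [0..<length u])))"

end

theory Submission
  imports Defs
begin

lemma prod_list_zero_mem:
  "(0::'s::{semiring_0,monoid_mult}) \<in> set xs \<Longrightarrow> prod_list xs = 0"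
  by (induction xs) auto

lemma prod0:
  "i < n \<Longrightarrow> f i = (0::'s::{semiring_0,monoid_mult}) \<Longrightarrow> prod_list (map f [0..<n]) = 0"
  by (rule prod_list_zero_mem) (metis atLeastLessThan_iff imageI le0 set_map set_upt)

lemma sum_single:
  assumes "finite S" "r \<in> S" "\<And>x. x \<in> S \<Longrightarrow> x \<noteq> r \<Longrightarrow> f x = 0"
  shows "sum f S = f r"
proof -
  have "sum f S = f r + sum f (S - {r})" using assms by (simp add: sum.remove)
  also have "sum f (S - {r}) = 0" using assms by (intro sum.neutral) auto
  finally show ?thesis by simp
qed

lemma dw_snoc:
  "i < length u \<Longrightarrow> delta_word \<delta> (take (Suc i) u) a = \<delta> (delta_word \<delta> (take i u) a) (u ! i)"
  by (simp add: delta_word_def take_Suc_conv_app_nth)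

lemma dw_nil[simp]: "delta_word \<delta> [] a = a"
  by (simp add: delta_word_def)

lemma hdw:
  "hat_delta_word \<delta> w a b = (if b = delta_word \<delta> w a then (1::'s::{semiring_0,monoid_mult}) else 0)"
proof (induction w arbitrary: a)
  case Nil then show ?case by auto
next
  case (Cons x w)
  have "hat_delta_word \<delta> (x # w) a b
      = (\<Sum>c\<in>UNIV. (if c = \<delta> a x then hat_delta_word \<delta> w c b else (0::'s)))"
  proof -
    have "\<And>c. (if c = \<delta> a x then 1 else 0) * hat_delta_word \<delta> w c b
       = (if c = \<delta> a x then hat_delta_word \<delta> w c b else (0::'s))" by simp
    then show ?thesis by (simp add: hat_delta_def)
  qed
  also have "\<dots> = hat_delta_word \<delta> w (\<delta> a x) b" by (simp add: sum.delta')
  finally show ?case using Cons by (simp add: delta_word_def)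
qed

lemma sig_sum: "(\<Sum>a\<in>UNIV. sigma (a0::'a::finite) a) = (1::'s::{semiring_0,monoid_mult})"
  by (simp add: sigma_def sum.delta sum.delta')

lemma least_mismatch:
  assumes "length as = length r" "as \<noteq> r"
  obtains j where "j < length r" "as ! j \<noteq> r ! j" "\<And>k. k < j \<Longrightarrow> as ! k = r ! k"
proof -
  have "\<exists>j. j < length r \<and> as ! j \<noteq> r ! j" using assms nth_equalityI by metis
  then obtain j where "j < length r \<and> as ! j \<noteq> r ! j"
    and "\<And>k. k < j \<Longrightarrow> \<not> (k < length r \<and> as ! k \<noteq> r ! k)"
    using exists_least_iff[of "\<lambda>j. j < length r \<and> as ! j \<noteq> r ! j"] by blast
  then show ?thesis using that by auto
qed

lemma fin_lists: "finite {as::'a::finite list. length as = n}"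
  using finite_lists_length_eq[of "UNIV::'a set" n] by simp


lemma sig1[simp]: "sigma a0 a0 = (1::'s::{semiring_0,monoid_mult})"
  by (simp add: sigma_def)

lemma sig0: "a \<noteq> a0 \<Longrightarrow> sigma a0 a = (0::'s::{semiring_0,monoid_mult})"
  by (simp add: sigma_def)

lemma hd1[simp]: "hat_delta \<delta> x a (\<delta> a x) = (1::'s::{semiring_0,monoid_mult})"
  by (simp add: hat_delta_def)

lemma hd0: "b \<noteq> \<delta> a x \<Longrightarrow> hat_delta \<delta> x a b = (0::'s::{semiring_0,monoid_mult})"
  by (simp add: hat_delta_def)

lemma m1n:
  fixes a0 :: "'a::finite" and \<omega> :: "'a \<Rightarrow> 'x \<Rightarrow> 'y \<Rightarrow> 's::{semiring_0,monoid_mult}"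
  assumes "u \<noteq> []"
  shows "mealy_1n a0 \<delta> \<omega> u v = mealy_cd a0 \<delta> \<omega> u v"
proof -
  define n where "n = length u"
  define r where "r = map (\<lambda>i. delta_word \<delta> (take i u) a0) [0..<n]"
  define f where "f = (\<lambda>as. sigma a0 (as ! 0) *
        prod_list (map (\<lambda>i. (if i = 0 then 1 else hat_delta \<delta> (u ! (i - 1)) (as ! (i - 1)) (as ! i))
                             * \<omega> (as ! i) (u ! i) (v ! i)) [0..<n]))"
  have n0: "n > 0" using assms n_def by auto
  have r0: "r ! 0 = a0" using n0 by (simp add: r_def)
  have rj: "r ! j = delta_word \<delta> (take j u) a0" if "j < n" for j
    using that by (simp add: r_def)
  have rS: "r ! j = \<delta> (r ! (j - 1)) (u ! (j - 1))" if "0 < j" "j < n" for j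
  proof -
    have "Suc (j - 1) = j" using that by simp
    then show ?thesis using that rj[of j] rj[of "j - 1"] dw_snoc[of "j - 1" u \<delta> a0]
      by (simp add: n_def)
  qed
  have "mealy_1n a0 \<delta> \<omega> u v = sum f {as. length as = n}"
    unfolding mealy_1n_def f_def n_def using assms by simp
  also have "\<dots> = f r"
  proof (rule sum_single)
    show "finite {as::'a list. length as = n}" by (rule fin_lists)
    show "r \<in> {as. length as = n}" by (simp add: r_def)
    fix as assume as: "as \<in> {as. length as = n}" "as \<noteq> r"
    show "f as = 0"
    proof (cases "as ! 0 = a0")
      case False then show ?thesis by (simp add: f_def sig0)
    next
      case True
      have lr: "length as = length r" using as by (simp add: r_def)
      obtain j where j: "j < length r" "as ! j \<noteq> r ! j" "\<And>k. k < j \<Longrightarrow> as ! k = r ! k"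
        using least_mismatch[OF lr as(2)] by blast
      have jn: "j < n" using j by (simp add: r_def)
      have j0: "j \<noteq> 0" using True r0 j by (metis neq0_conv)
      have "as ! (j - 1) = r ! (j - 1)" using j j0 by auto
      then have "hat_delta \<delta> (u ! (j - 1)) (as ! (j - 1)) (as ! j) = (0::'s)"
        using rS[of j] j j0 jn by (intro hd0) auto
      then show ?thesis unfolding f_def
        by (subst prod0[OF jn]) (use j0 in auto)
    qed
  qed
  also have "f r = mealy_cd a0 \<delta> \<omega> u v"
  proof -
    have eq: "map (\<lambda>i. (if i = 0 then 1 else hat_delta \<delta> (u ! (i - 1)) (r ! (i - 1)) (r ! i))
                             * \<omega> (r ! i) (u ! i) (v ! i)) [0..<n]
        = map (\<lambda>i. \<omega> (delta_word \<delta> (take i u) a0) (u ! i) (v ! i)) [0..<n]"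
      using rS rj by (intro map_cong[OF refl]) auto
    show ?thesis unfolding f_def mealy_cd_def eq using assms r0 by (simp add: n_def)
  qed
  finally show ?thesis .
qed


lemma ms:
  fixes a0 :: "'a::finite" and \<omega> :: "'a \<Rightarrow> 'x \<Rightarrow> 'y \<Rightarrow> 's::{semiring_0,monoid_mult}"
  assumes "u \<noteq> []"
  shows "mealy_s a0 \<delta> \<omega> u v = mealy_cd a0 \<delta> \<omega> u v"
proof -
  define n where "n = length u"
  define r where "r = map (\<lambda>i. delta_word \<delta> (take i u) a0) [0..<Suc n]"
  define f where "f = (\<lambda>as. sigma a0 (as ! 0) *
        prod_list (map (\<lambda>i. \<omega> (as ! i) (u ! i) (v ! i) * hat_delta \<delta> (u ! i) (as ! i) (as ! (i + 1)))
                       [0..<n]))"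
  have n0: "n > 0" using assms n_def by auto
  have r0: "r ! 0 = a0" by (simp add: r_def del: upt_Suc)
  have rj: "r ! j = delta_word \<delta> (take j u) a0" if "j \<le> n" for j
    using that by (simp add: r_def less_Suc_eq_le del: upt_Suc)
  have rS: "r ! j = \<delta> (r ! (j - 1)) (u ! (j - 1))" if "0 < j" "j \<le> n" for j
  proof -
    have "Suc (j - 1) = j" using that by simp
    then show ?thesis using that rj[of j] rj[of "j - 1"] dw_snoc[of "j - 1" u \<delta> a0]
      by (simp add: n_def)
  qed
  have "mealy_s a0 \<delta> \<omega> u v = sum f {as. length as = Suc n}"
    unfolding mealy_s_def f_def n_def using assms by simp
  also have "\<dots> = f r"
  proof (rule sum_single)
    show "finite {as::'a list. length as = Suc n}" by (rule fin_lists)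
    show "r \<in> {as. length as = Suc n}" by (simp add: r_def del: upt_Suc)
    fix as assume as: "as \<in> {as. length as = Suc n}" "as \<noteq> r"
    show "f as = 0"
    proof (cases "as ! 0 = a0")
      case False then show ?thesis by (simp add: f_def sig0)
    next
      case True
      have lr: "length as = length r" using as by (simp add: r_def del: upt_Suc)
      obtain j where j: "j < length r" "as ! j \<noteq> r ! j" "\<And>k. k < j \<Longrightarrow> as ! k = r ! k"
        using least_mismatch[OF lr as(2)] by blast
      have jn: "j \<le> n" using j by (simp add: r_def del: upt_Suc)
      have j0: "j \<noteq> 0" using True r0 j by (metis neq0_conv)
      have jn': "j - 1 < n" using jn j0 by simp
      have jj: "j - 1 + 1 = j" using j0 by simp
      have "as ! (j - 1) = r ! (j - 1)" using j j0 by auto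
      then have "hat_delta \<delta> (u ! (j - 1)) (as ! (j - 1)) (as ! (j - 1 + 1)) = (0::'s)"
        unfolding jj using rS[of j] j j0 jn by (intro hd0) auto
      then show ?thesis unfolding f_def
        by (subst prod0[OF jn']) auto
    qed
  qed
  also have "f r = mealy_cd a0 \<delta> \<omega> u v"
  proof -
    have eq: "map (\<lambda>i. \<omega> (r ! i) (u ! i) (v ! i) * hat_delta \<delta> (u ! i) (r ! i) (r ! (i + 1))) [0..<n]
        = map (\<lambda>i. \<omega> (delta_word \<delta> (take i u) a0) (u ! i) (v ! i)) [0..<n]"
      using rS rj by (intro map_cong[OF refl]) auto
    show ?thesis unfolding f_def mealy_cd_def eq using assms r0 by (simp add: n_def)
  qed
  finally show ?thesis .
qed

lemma mn1:
  fixes a0 :: "'a::finite" and \<omega> :: "'a \<Rightarrow> 'x \<Rightarrow> 'y \<Rightarrow> 's::{semiring_0,monoid_mult}"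
  assumes "u \<noteq> []"
  shows "mealy_n1 a0 \<delta> \<omega> u v = mealy_cd a0 \<delta> \<omega> u v"
proof -
  define n where "n = length u"
  define r where "r = map (\<lambda>i. delta_word \<delta> (take i u) a0) [0..<n]"
  define f where "f = (\<lambda>as. sigma a0 (as ! 0) *
        prod_list (map (\<lambda>i. (if i = 0 then 1 else hat_delta_word \<delta> (take i u) (as ! 0) (as ! i))
                             * \<omega> (as ! i) (u ! i) (v ! i)) [0..<n]))"
  have n0: "n > 0" using assms n_def by auto
  have r0: "r ! 0 = a0" using n0 by (simp add: r_def)
  have rj: "r ! j = delta_word \<delta> (take j u) a0" if "j < n" for j
    using that by (simp add: r_def)
  have "mealy_n1 a0 \<delta> \<omega> u v = sum f {as. length as = n}"
    unfolding mealy_n1_def f_def n_def using assms by simp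
  also have "\<dots> = f r"
  proof (rule sum_single)
    show "finite {as::'a list. length as = n}" by (rule fin_lists)
    show "r \<in> {as. length as = n}" by (simp add: r_def)
    fix as assume as: "as \<in> {as. length as = n}" "as \<noteq> r"
    show "f as = 0"
    proof (cases "as ! 0 = a0")
      case False then show ?thesis by (simp add: f_def sig0)
    next
      case True
      have lr: "length as = length r" using as by (simp add: r_def)
      obtain j where j: "j < length r" "as ! j \<noteq> r ! j" "\<And>k. k < j \<Longrightarrow> as ! k = r ! k"
        using least_mismatch[OF lr as(2)] by blast
      have jn: "j < n" using j by (simp add: r_def)
      have j0: "j \<noteq> 0" using True r0 j by (metis neq0_conv)
      have "hat_delta_word \<delta> (take j u) (as ! 0) (as ! j) = (0::'s)"
        using True rj[OF jn] j by (simp add: hdw)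
      then show ?thesis unfolding f_def
        by (subst prod0[OF jn]) (use j0 in auto)
    qed
  qed
  also have "f r = mealy_cd a0 \<delta> \<omega> u v"
  proof -
    have eq: "map (\<lambda>i. (if i = 0 then 1 else hat_delta_word \<delta> (take i u) (r ! 0) (r ! i))
                             * \<omega> (r ! i) (u ! i) (v ! i)) [0..<n]
        = map (\<lambda>i. \<omega> (delta_word \<delta> (take i u) a0) (u ! i) (v ! i)) [0..<n]"
      using rj r0 by (intro map_cong[OF refl]) (auto simp: hdw)
    show ?thesis unfolding f_def mealy_cd_def eq using assms r0 by (simp add: n_def)
  qed
  finally show ?thesis .
qed

lemma mo1n:
  fixes a0 :: "'a::finite" and \<omega> :: "'a \<Rightarrow> 'y \<Rightarrow> 's::{semiring_0,monoid_mult}"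
  assumes "u \<noteq> []"
  shows "moore_1n a0 \<delta> \<omega> u v = moore_cd a0 \<delta> \<omega> u v"
proof -
  define n where "n = length u"
  define r where "r = map (\<lambda>i. delta_word \<delta> (take i u) a0) [0..<Suc n]"
  define f where "f = (\<lambda>as. sigma a0 (as ! 0) *
        prod_list (map (\<lambda>i. hat_delta \<delta> (u ! i) (as ! i) (as ! (i + 1)) * \<omega> (as ! (i + 1)) (v ! i))
                       [0..<n]))"
  have n0: "n > 0" using assms n_def by auto
  have r0: "r ! 0 = a0" by (simp add: r_def del: upt_Suc)
  have rj: "r ! j = delta_word \<delta> (take j u) a0" if "j \<le> n" for j
    using that by (simp add: r_def less_Suc_eq_le del: upt_Suc)
  have rS: "r ! j = \<delta> (r ! (j - 1)) (u ! (j - 1))" if "0 < j" "j \<le> n" for j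
  proof -
    have "Suc (j - 1) = j" using that by simp
    then show ?thesis using that rj[of j] rj[of "j - 1"] dw_snoc[of "j - 1" u \<delta> a0]
      by (simp add: n_def)
  qed
  have "moore_1n a0 \<delta> \<omega> u v = sum f {as. length as = Suc n}"
    unfolding moore_1n_def f_def n_def using assms by simp
  also have "\<dots> = f r"
  proof (rule sum_single)
    show "finite {as::'a list. length as = Suc n}" by (rule fin_lists)
    show "r \<in> {as. length as = Suc n}" by (simp add: r_def del: upt_Suc)
    fix as assume as: "as \<in> {as. length as = Suc n}" "as \<noteq> r"
    show "f as = 0"
    proof (cases "as ! 0 = a0")
      case False then show ?thesis by (simp add: f_def sig0)
    next
      case True
      have lr: "length as = length r" using as by (simp add: r_def del: upt_Suc)
      obtain j where j: "j < length r" "as ! j \<noteq> r ! j" "\<And>k. k < j \<Longrightarrow> as ! k = r ! k"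
        using least_mismatch[OF lr as(2)] by blast
      have jn: "j \<le> n" using j by (simp add: r_def del: upt_Suc)
      have j0: "j \<noteq> 0" using True r0 j by (metis neq0_conv)
      have jn': "j - 1 < n" using jn j0 by simp
      have jj: "j - 1 + 1 = j" using j0 by simp
      have "as ! (j - 1) = r ! (j - 1)" using j j0 by auto
      then have "hat_delta \<delta> (u ! (j - 1)) (as ! (j - 1)) (as ! (j - 1 + 1)) = (0::'s)"
        unfolding jj using rS[of j] j j0 jn by (intro hd0) auto
      then show ?thesis unfolding f_def
        by (subst prod0[OF jn']) auto
    qed
  qed
  also have "f r = moore_cd a0 \<delta> \<omega> u v"
  proof -
    have eq: "map (\<lambda>i. hat_delta \<delta> (u ! i) (r ! i) (r ! (i + 1)) * \<omega> (r ! (i + 1)) (v ! i)) [0..<n]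
        = map (\<lambda>i. \<omega> (delta_word \<delta> (take (i + 1) u) a0) (v ! i)) [0..<n]"
    proof (intro map_cong[OF refl])
      fix i assume "i \<in> set [0..<n]"
      then have i: "i < n" by simp
      have "r ! (i + 1) = \<delta> (r ! i) (u ! i)" using rS[of "i+1"] i by simp
      moreover have "r ! (i + 1) = delta_word \<delta> (take (i + 1) u) a0" using rj[of "i+1"] i by simp
      ultimately show "hat_delta \<delta> (u ! i) (r ! i) (r ! (i + 1)) * \<omega> (r ! (i + 1)) (v ! i)
          = \<omega> (delta_word \<delta> (take (i + 1) u) a0) (v ! i)" by (simp add: hat_delta_def)
    qed
    show ?thesis unfolding f_def moore_cd_def eq using assms r0 by (simp add: n_def)
  qed
  finally show ?thesis .
qed

lemma mon1:
  fixes a0 :: "'a::finite" and \<omega> :: "'a \<Rightarrow> 'y \<Rightarrow> 's::{semiring_0,monoid_mult}"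
  assumes "u \<noteq> []"
  shows "moore_n1 a0 \<delta> \<omega> u v = moore_cd a0 \<delta> \<omega> u v"
proof -
  define n where "n = length u"
  define r where "r = map (\<lambda>i. delta_word \<delta> (take i u) a0) [0..<Suc n]"
  define f where "f = (\<lambda>as. sigma a0 (as ! 0) *
        prod_list (map (\<lambda>i. hat_delta_word \<delta> (take (i + 1) u) (as ! 0) (as ! (i + 1)) * \<omega> (as ! (i + 1)) (v ! i))
                       [0..<n]))"
  have n0: "n > 0" using assms n_def by auto
  have r0: "r ! 0 = a0" by (simp add: r_def del: upt_Suc)
  have rj: "r ! j = delta_word \<delta> (take j u) a0" if "j \<le> n" for j
    using that by (simp add: r_def less_Suc_eq_le del: upt_Suc)
  have "moore_n1 a0 \<delta> \<omega> u v = sum f {as. length as = Suc n}"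
    unfolding moore_n1_def f_def n_def using assms by simp
  also have "\<dots> = f r"
  proof (rule sum_single)
    show "finite {as::'a list. length as = Suc n}" by (rule fin_lists)
    show "r \<in> {as. length as = Suc n}" by (simp add: r_def del: upt_Suc)
    fix as assume as: "as \<in> {as. length as = Suc n}" "as \<noteq> r"
    show "f as = 0"
    proof (cases "as ! 0 = a0")
      case False then show ?thesis by (simp add: f_def sig0)
    next
      case True
      have lr: "length as = length r" using as by (simp add: r_def del: upt_Suc)
      obtain j where j: "j < length r" "as ! j \<noteq> r ! j" "\<And>k. k < j \<Longrightarrow> as ! k = r ! k"
        using least_mismatch[OF lr as(2)] by blast
      have jn: "j \<le> n" using j by (simp add: r_def del: upt_Suc)
      have j0: "j \<noteq> 0" using True r0 j by (metis neq0_conv)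
      have jn': "j - 1 < n" using jn j0 by simp
      have jj: "j - 1 + 1 = j" using j0 by simp
      have "hat_delta_word \<delta> (take (j - 1 + 1) u) (as ! 0) (as ! (j - 1 + 1)) = (0::'s)"
        unfolding jj using True rj[OF jn] j by (simp add: hdw)
      then show ?thesis unfolding f_def
        by (subst prod0[OF jn']) auto
    qed
  qed
  also have "f r = moore_cd a0 \<delta> \<omega> u v"
  proof -
    have eq: "map (\<lambda>i. hat_delta_word \<delta> (take (i + 1) u) (r ! 0) (r ! (i + 1)) * \<omega> (r ! (i + 1)) (v ! i)) [0..<n]
        = map (\<lambda>i. \<omega> (delta_word \<delta> (take (i + 1) u) a0) (v ! i)) [0..<n]"
    proof (intro map_cong[OF refl])
      fix i assume "i \<in> set [0..<n]"
      then have i: "i < n" by simp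
      have "r ! (i + 1) = delta_word \<delta> (take (i + 1) u) a0" using rj[of "i+1"] i by simp
      then show "hat_delta_word \<delta> (take (i + 1) u) (r ! 0) (r ! (i + 1)) * \<omega> (r ! (i + 1)) (v ! i)
          = \<omega> (delta_word \<delta> (take (i + 1) u) a0) (v ! i)" using r0 by (simp add: hdw)
    qed
    show ?thesis unfolding f_def moore_cd_def eq using assms r0 by (simp add: n_def)
  qed
  finally show ?thesis .
qed

theorem theorem7:
  fixes a0 :: "'a::finite" and \<delta> :: "'a \<Rightarrow> 'x::finite \<Rightarrow> 'a"
    and \<omega> :: "'a \<Rightarrow> 'x \<Rightarrow> 'y::finite \<Rightarrow> 's::{semiring_0,monoid_mult}"
    and b0 :: "'b::finite" and \<delta>' :: "'b \<Rightarrow> 'x2::finite \<Rightarrow> 'b"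
    and \<omega>' :: "'b \<Rightarrow> 'y2::finite \<Rightarrow> 's"
  shows "(\<forall>u v. length u = length v \<longrightarrow>
            mealy_cd a0 \<delta> \<omega> u v = mealy_1n a0 \<delta> \<omega> u v \<and>
            mealy_1n a0 \<delta> \<omega> u v = mealy_n1 a0 \<delta> \<omega> u v \<and>
            mealy_n1 a0 \<delta> \<omega> u v = mealy_s a0 \<delta> \<omega> u v)
       \<and> (\<forall>u v. length u = length v \<longrightarrow>
            moore_cd b0 \<delta>' \<omega>' u v = moore_1n b0 \<delta>' \<omega>' u v \<and>
            moore_1n b0 \<delta>' \<omega>' u v = moore_n1 b0 \<delta>' \<omega>' u v)"
proof (intro conjI allI impI)
  fix u :: "'x list" and v :: "'y list"
  show "mealy_cd a0 \<delta> \<omega> u v = mealy_1n a0 \<delta> \<omega> u v"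
    by (cases "u = []") (simp add: mealy_cd_def mealy_1n_def sig_sum, simp add: m1n)
  show "mealy_1n a0 \<delta> \<omega> u v = mealy_n1 a0 \<delta> \<omega> u v"
    by (cases "u = []") (simp add: mealy_n1_def mealy_1n_def, simp add: m1n mn1)
  show "mealy_n1 a0 \<delta> \<omega> u v = mealy_s a0 \<delta> \<omega> u v"
    by (cases "u = []") (simp add: mealy_n1_def mealy_s_def, simp add: ms mn1)
next
  fix u :: "'x2 list" and v :: "'y2 list"
  show "moore_cd b0 \<delta>' \<omega>' u v = moore_1n b0 \<delta>' \<omega>' u v"
    by (cases "u = []") (simp add: moore_cd_def moore_1n_def sig_sum, simp add: mo1n)
  show "moore_1n b0 \<delta>' \<omega>' u v = moore_n1 b0 \<delta>' \<omega>' u v"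
    by (cases "u = []") (simp add: moore_n1_def moore_1n_def, simp add: mo1n mon1)
qed

end
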